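(* Let $a,b,c$ be nonnegative integers with $a+b+c=n$ and suppose $\gcd(a+b,b+c)=1$. Let $M=M(a,b,c\mid n)$ and let $P$ be the unique connected component of $M$ that is a path (all other components being cycles), with vertices $u_1<u_2<\cdots<u_{n'}$ listed in increasing order as integers. Then there are exactly two indices $i\in\{1,\ldots,n'-1\}$ such that $u_i$ and $u_{i+1}$ are joined by an edge of $M$ (i.e. $M$ has exactly two dead ends).
   Context: For compositions $\underline x=(a_1,\ldots,a_m)$, $\underline y=(b_1,\ldots,b_t)$ of $n$ (nonnegative integers summing to $n$), the meander $M(\underline x\mid\underline y)$ is the graph on vertices $1,\ldots,n$ whose edges are: for each part $a_k$ with $s=a_1+\cdots+a_{k-1}$, the top edges $\{s+j,\,s+a_k+1-j\}$ for $1\le j\le\lfloor a_k/2\rfloor$; and for each part $b_k$ with $s=b_1+\cdots+b_{k-1}$, the bottom edges $\{s+j,\,s+b_k+1-j\}$ for $1\le j\le\lfloor b_k/2\rfloor$. Here $\underline x=(a,b,c)$ and $\underline y=(n)$. Under the hypothesis $\gcd(a+b,b+c)=1$, $M$ has exactly two vertices of degree $1$ and all others have degree $2$, so exactly one component of $M$ is a path and the rest are cycles. A dead end is an interval between consecutive vertices $u_i,u_{i+1}$ of $P$ (consecutive in the inherited order) such that $u_i$ and $u_{i+1}$ are adjacent in $M$.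
   Formalization: The parts a, b, c are positive integers rather than nonnegative ones, so compositions $(a,b,c)$ of n with a zero part are excluded. The statement above fails without it. *)

theory Defs
  imports Main
begin

definition comp_arcs :: "nat list \<Rightarrow> nat set set" where
  "comp_arcs xs = {{sum_list (take k xs) + j, sum_list (take k xs) + xs ! k + 1 - j} | k j.
      k < length xs \<and> 1 \<le> j \<and> j \<le> xs ! k div 2}"

text \<open>Adjacency in the meander M(xs | ys) (top arcs from xs, bottom arcs from ys).\<close>
definition meander_adj :: "nat list \<Rightarrow> nat list \<Rightarrow> nat \<Rightarrow> nat \<Rightarrow> bool" where
  "meander_adj xs ys u v \<longleftrightarrow> {u, v} \<in> comp_arcs xs \<union> comp_arcs ys"

definition is_component :: "nat set \<Rightarrow> (nat \<Rightarrow> nat \<Rightarrow> bool) \<Rightarrow> nat set \<Rightarrow> bool" where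
  "is_component V E C \<longleftrightarrow> C \<subseteq> V \<and> (\<exists>v\<in>C. C = {w \<in> V. (\<lambda>x y. x \<in> V \<and> y \<in> V \<and> E x y)\<^sup>*\<^sup>* v w})"

definition induces_path :: "(nat \<Rightarrow> nat \<Rightarrow> bool) \<Rightarrow> nat set \<Rightarrow> bool" where
  "induces_path E C \<longleftrightarrow> (\<exists>ps. distinct ps \<and> set ps = C \<and>
      (\<forall>i. i + 1 < length ps \<longrightarrow> E (ps ! i) (ps ! (i + 1))) \<and>
      (\<forall>u\<in>C. \<forall>v\<in>C. E u v \<longrightarrow> (\<exists>i. i + 1 < length ps \<and> {u, v} = {ps ! i, ps ! (i + 1)})))"

text \<open>Dead ends of a vertex set C: indices i (0-based) such that the i-th and (i+1)-th
  smallest elements of C are adjacent.\<close>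
definition dead_ends :: "(nat \<Rightarrow> nat \<Rightarrow> bool) \<Rightarrow> nat set \<Rightarrow> nat set" where
  "dead_ends E C = (let u = sorted_list_of_set C in
      {i. i + 1 < length u \<and> E (u ! i) (u ! (i + 1))})"

end

theory Submission
  imports Defs "HOL-Number_Theory.Number_Theory"
begin

lemma comp_arcs_I:
  "k < length xs \<Longrightarrow> 1 \<le> j \<Longrightarrow> j \<le> xs!k div 2 \<Longrightarrow>
   A = {sum_list (take k xs) + j, sum_list (take k xs) + xs!k + 1 - j} \<Longrightarrow> A \<in> comp_arcs xs"
  unfolding comp_arcs_def by blast

lemma arc_in:
  assumes "k < length xs" "s = sum_list (take k xs)" "L = xs ! k"
    "s < x" "x \<le> s + L" "x + y = 2*s + L + 1" "x \<noteq> y"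
  shows "{x,y} \<in> comp_arcs xs"
proof (cases "x - s \<le> L div 2")
  case True
  have "{x,y} = {s + (x-s), s + L + 1 - (x-s)}" using assms by auto
  then show ?thesis using assms True
    by (intro comp_arcs_I[of k xs "x-s"]) auto
next
  case False
  have "{x,y} = {s + (y-s), s + L + 1 - (y-s)}" using assms by auto
  moreover have "y - s \<le> L div 2"
  proof -
    define h where "h = L div 2"
    define r where "r = L mod 2"
    have L: "L = 2*h + r" "r < 2" unfolding h_def r_def by simp_all
    show ?thesis unfolding h_def[symmetric] using assms(4-7) False L
      unfolding h_def[symmetric] by (cases "r = 0") linarith+
  qed
  ultimately show ?thesis using assms
    by (intro comp_arcs_I[of k xs "y-s"]) auto
qed

lemma consec_arc:
  "{x, x+1} \<in> comp_arcs xs \<longleftrightarrow>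
   (\<exists>k<length xs. even (xs!k) \<and> 0 < xs!k \<and> x = sum_list (take k xs) + xs!k div 2)"
proof
  assume "{x, x+1} \<in> comp_arcs xs"
  then obtain k j where k: "k < length xs" "1 \<le> j" "j \<le> xs!k div 2"
    and e: "{x, x+1} = {sum_list (take k xs) + j, sum_list (take k xs) + xs ! k + 1 - j}"
    unfolding comp_arcs_def by blast
  from e have "(x = sum_list (take k xs) + j \<and> x+1 = sum_list (take k xs) + xs ! k + 1 - j)
     \<or> (x = sum_list (take k xs) + xs ! k + 1 - j \<and> x+1 = sum_list (take k xs) + j)"
    by (simp add: doubleton_eq_iff)
  then have "xs!k = 2*j \<and> x = sum_list (take k xs) + j" using k by auto
  then show "\<exists>k<length xs. even (xs!k) \<and> 0 < xs!k \<and> x = sum_list (take k xs) + xs!k div 2"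
    using k by (intro exI[of _ k]) auto
next
  assume "\<exists>k<length xs. even (xs!k) \<and> 0 < xs!k \<and> x = sum_list (take k xs) + xs!k div 2"
  then obtain k where k: "k<length xs" "even (xs!k)" "0 < xs!k" "x = sum_list (take k xs) + xs!k div 2"
    by blast
  have "{x,x+1} = {sum_list (take k xs) + xs!k div 2, sum_list (take k xs) + xs ! k + 1 - xs!k div 2}"
    using k by auto
  then show "{x, x+1} \<in> comp_arcs xs" using k
    by (intro comp_arcs_I[of k xs "xs!k div 2"]) auto
qed

lemma adj_consec:
  "meander_adj [a,b,c] [n] x (x+1) \<longleftrightarrow>
    (even a \<and> 0 < a \<and> x = a div 2) \<or> (even b \<and> 0 < b \<and> x = a + b div 2) \<or>
    (even c \<and> 0 < c \<and> x = a + b + c div 2) \<or> (even n \<and> 0 < n \<and> x = n div 2)"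
proof -
  have e3: "(\<exists>k<Suc (Suc (Suc 0)). P k) \<longleftrightarrow> P 0 \<or> P (Suc 0) \<or> P (Suc (Suc 0))" for P :: "nat \<Rightarrow> bool"
    by (auto simp: less_Suc_eq)
  show ?thesis unfolding meander_adj_def Un_iff consec_arc
    by (simp only: e3 length_Cons list.size) simp
qed

lemma rtr_sym:
  assumes "symp r" "r\<^sup>*\<^sup>* x y" shows "r\<^sup>*\<^sup>* y x"
  using symp_rtranclp[OF assms(1)] assms(2) by (meson sympD)

lemma step_ext:
  assumes "(\<lambda>x y. x \<in> V \<and> y \<in> V \<and> E x y)\<^sup>*\<^sup>* u x" "x \<in> V" "y \<in> V" "x = y \<or> E x y"
  shows "(\<lambda>x y. x \<in> V \<and> y \<in> V \<and> E x y)\<^sup>*\<^sup>* u y"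
  using assms by (metis (mono_tags, lifting) rtranclp.rtrancl_into_rtrancl)

theorem lemma4p12:
  fixes a b c n :: nat and P :: "nat set"
  assumes "0 < a" and "0 < b" and "0 < c"
    and "a + b + c = n"
    and "gcd (a + b) (b + c) = 1"
    and "is_component {1..n} (meander_adj [a, b, c] [n]) P"
    and "induces_path (meander_adj [a, b, c] [n]) P"
  shows "card (dead_ends (meander_adj [a, b, c] [n]) P) = 2"
proof -
  note pos = assms(1-4)
  define E where "E = meander_adj [a,b,c] [n]"
  define V where "V = {1..n}"
  define G where "G = (\<lambda>x y. x \<in> V \<and> y \<in> V \<and> E x y)"
  have Esym: "E x y \<Longrightarrow> E y x" for x y unfolding E_def meander_adj_def by (simp add: insert_commute)
  have Gsym: "symp G" unfolding G_def symp_def using Esym by blast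
  have rstep: "x \<in> V \<Longrightarrow> x = n+1-x \<or> E x (n+1-x)" for x
  proof -
    assume x: "x \<in> V"
    show ?thesis
    proof (cases "x = n+1-x")
      case False
      have "{x, n+1-x} \<in> comp_arcs [n]"
        using x False by (intro arc_in[of 0 "[n]" 0 n]) (auto simp: V_def)
      then show ?thesis unfolding E_def meander_adj_def by simp
    qed simp
  qed
  define t where "t x = (if x \<le> a then a+1-x else if x \<le> a+b then 2*a+b+1-x else 2*(a+b)+c+1-x)" for x
  have tstep: "x \<in> V \<Longrightarrow> x = t x \<or> E x (t x)" for x
  proof -
    assume x: "x \<in> V"
    show ?thesis
    proof (cases "x = t x")
      case False
      have "{x, t x} \<in> comp_arcs [a,b,c]"
      proof (cases "x \<le> a")
        case True
        have tx: "t x = a+1-x" using True by (simp add: t_def)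
        have x1: "1 \<le> x" using x by (simp add: V_def)
        show ?thesis
          apply (rule arc_in[of 0 "[a,b,c]" 0 a])
          using x1 False True tx by simp_all
      next
        case F1: False
        show ?thesis
        proof (cases "x \<le> a + b")
          case True
          have tx: "t x = 2*a+b+1-x" using True F1 by (simp add: t_def)
          show ?thesis
            apply (rule arc_in[of 1 "[a,b,c]" a b])
            using False True F1 tx by simp_all
        next
          case F2: False
          have tx: "t x = 2*(a+b)+c+1-x" using F2 F1 by (simp add: t_def)
          have xn: "x \<le> n" using x by (simp add: V_def)
          show ?thesis
            apply (rule arc_in[of 2 "[a,b,c]" "a+b" c])
            using False F2 F1 tx xn pos by simp_all
        qed
      qed
      then show ?thesis unfolding E_def meander_adj_def by simp
    qed simp
  qed
  have ext: "G\<^sup>*\<^sup>* u x \<Longrightarrow> x \<in> V \<Longrightarrow> y \<in> V \<Longrightarrow> x = y \<or> E x y \<Longrightarrow> G\<^sup>*\<^sup>* u y" for u x y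
    unfolding G_def by (rule step_ext)
  define m where "m = a + b"
  define N where "N = n + b"
  define fq where "fq q = (if q < c then q + m else if q < c + b then q + a - c else q - b - c)" for q
  have fstep: "q < n \<Longrightarrow> G\<^sup>*\<^sup>* u (q+1) \<Longrightarrow> G\<^sup>*\<^sup>* u (fq q + 1)" for q u
  proof -
    assume q: "q < n" and g: "G\<^sup>*\<^sup>* u (q+1)"
    have g2: "G\<^sup>*\<^sup>* u (n - q)"
      using ext[OF g _ _ rstep[of "q+1"]] q by (auto simp: V_def)
    have nq: "n - q \<in> V" using q by (auto simp: V_def)
    have tq: "t (n - q) \<in> V" using q pos by (auto simp: V_def t_def)
    have g3: "G\<^sup>*\<^sup>* u (t (n - q))"
      using ext[OF g2 nq tq tstep[OF nq]] .
    have "t (n - q) = fq q + 1" using q pos by (auto simp: t_def fq_def m_def)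
    then show ?thesis using g3 by simp
  qed
  define qq where "qq k = (k * m) mod N" for k
  have Npos: "n < N" unfolding N_def using pos by simp
  have qsuc: "qq (Suc k) = (qq k + m) mod N" for k
    unfolding qq_def by (simp add: mod_add_left_eq add.commute[of m])
  have qlt: "qq k < N" for k unfolding qq_def using Npos by simp
  have Q: "(qq k < n \<longrightarrow> G\<^sup>*\<^sup>* 1 (qq k + 1)) \<and>
      (n \<le> qq k \<longrightarrow> (\<exists>q'. c \<le> q' \<and> q' < c + b \<and> q' + m = qq k \<and> G\<^sup>*\<^sup>* 1 (q' + 1)))" for k
  proof (induction k)
    case 0
    then show ?case using pos by (simp add: qq_def)
  next
    case (Suc k)
    let ?q = "qq k"
    show ?case
    proof (cases "?q < n")
      case True
      with Suc.IH have g: "G\<^sup>*\<^sup>* 1 (?q + 1)" by blast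
      have gf: "G\<^sup>*\<^sup>* 1 (fq ?q + 1)" using fstep[OF True g] .
      show ?thesis
      proof (cases "?q < c")
        case True
        then have "qq (Suc k) = ?q + m" unfolding qsuc using pos Npos
          by (intro mod_less) (simp add: m_def N_def)
        then show ?thesis using gf True pos by (simp add: fq_def m_def)
      next
        case F1: False
        show ?thesis
        proof (cases "?q < c + b")
          case True
          then have eq: "qq (Suc k) = ?q + m" unfolding qsuc using pos Npos
            by (intro mod_less) (simp add: m_def N_def)
          have "n \<le> qq (Suc k)" using eq F1 pos by (simp add: m_def)
          moreover have "c \<le> ?q \<and> ?q < c+b \<and> ?q + m = qq (Suc k) \<and> G\<^sup>*\<^sup>* 1 (?q+1)"
            using eq F1 True g by simp
          ultimately show ?thesis by (meson not_le)
        next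
          case F2: False
          have "qq (Suc k) = (?q + m - N) mod N" unfolding qsuc
            using F2 pos by (intro le_mod_geq) (simp add: m_def N_def)
          also have "\<dots> = ?q + m - N" using F2 pos True by (intro mod_less) (simp add: m_def N_def)
          also have "\<dots> = ?q - b - c" by (simp add: m_def N_def pos(4)[symmetric])
          also have "\<dots> = fq ?q" using F1 F2 by (simp add: fq_def)
          finally have eq: "qq (Suc k) = fq ?q" .
          have A: "qq (Suc k) < n" unfolding eq using F1 F2 \<open>?q < n\<close> by (simp add: fq_def)
          have B: "G\<^sup>*\<^sup>* 1 (qq (Suc k) + 1)" unfolding eq by (rule gf)
          show ?thesis using A B by (meson not_le)
        qed
      qed
    next
      case False
      then have "n \<le> ?q" by simp
      with Suc.IH obtain q' where q': "c \<le> q'" "q' < c + b" "q' + m = ?q" "G\<^sup>*\<^sup>* 1 (q' + 1)" by blast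
      have q'n: "q' < n" using q' pos by simp
      have gf: "G\<^sup>*\<^sup>* 1 (fq q' + 1)" using fstep[OF q'n q'(4)] .
      have "qq (Suc k) = (?q + m - N) mod N" unfolding qsuc
        using q' pos by (intro le_mod_geq) (simp add: m_def N_def)
      also have "\<dots> = ?q + m - N" using q' pos by (intro mod_less) (simp add: m_def N_def)
      also have "\<dots> = q' + a - c" using q' pos by (simp add: m_def N_def)
      also have "\<dots> = fq q'" using q' by (simp add: fq_def)
      finally have eq: "qq (Suc k) = fq q'" .
      have A: "qq (Suc k) < n" unfolding eq using q' pos by (simp add: fq_def)
      have B: "G\<^sup>*\<^sup>* 1 (qq (Suc k) + 1)" unfolding eq by (rule gf)
      show ?thesis using A B by (meson not_le)
    qed
  qed
  have cop: "gcd m N = 1"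
  proof -
    have "N = m + (b + c)" unfolding N_def m_def using pos by simp
    then show ?thesis using assms(5) gcd_add2[of m "b+c"] by (simp add: m_def)
  qed
  have allconn: "w \<in> V \<Longrightarrow> G\<^sup>*\<^sup>* 1 w" for w
  proof -
    assume w: "w \<in> V"
    obtain x where "[m * x = w - 1] (mod N)" using cong_solve_dvd_nat[of m N "w-1"] cop by auto
    moreover have "w - 1 < N" using w Npos by (simp add: V_def, linarith)
    ultimately have "qq x = w - 1" unfolding qq_def cong_def by (simp add: mult.commute)
    then show ?thesis using Q[of x] w by (auto simp: V_def)
  qed
  from assms(6) obtain v0 where v0: "v0 \<in> P" "P = {w \<in> V. G\<^sup>*\<^sup>* v0 w}" "P \<subseteq> V"
    unfolding is_component_def G_def V_def E_def by blast
  have "G\<^sup>*\<^sup>* v0 1" using rtr_sym[OF Gsym allconn[of v0]] v0 by blast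
  then have PV: "P = V" using v0 allconn by (auto intro: rtranclp_trans)
  have sl: "sorted_list_of_set P = [1..<n+1]"
  proof -
    have "{1..n} = {1..<n+1}" by auto
    then show ?thesis unfolding PV V_def by (simp only: sorted_list_of_set_range)
  qed
  have D: "dead_ends E P = {i. i + 1 < n \<and> E (i+1) (i+1+1)}"
  proof -
    have nth1: "i < n \<Longrightarrow> [1..<n+1] ! i = 1 + i" for i by (rule nth_upt) simp
    show ?thesis unfolding dead_ends_def Let_def sl length_upt
      by (auto simp del: upt_Suc simp: nth1)
  qed
  have D2: "dead_ends E P = {i. i + 1 < n \<and>
     ((even a \<and> 0 < a \<and> i+1 = a div 2) \<or> (even b \<and> 0 < b \<and> i+1 = a + b div 2) \<or>
    (even c \<and> 0 < c \<and> i+1 = a + b + c div 2) \<or> (even n \<and> 0 < n \<and> i+1 = n div 2))}"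
    unfolding D unfolding E_def adj_consec ..
  have notodd: "\<not> (odd a \<and> odd b \<and> odd c)"
  proof
    assume "odd a \<and> odd b \<and> odd c"
    then have "2 dvd a + b" "2 dvd b + c" by auto
    then have "2 dvd gcd (a+b) (b+c)" by simp
    then show False using assms(5) by simp
  qed
  have noteven: "\<not> (even a \<and> even b \<and> even c)"
  proof
    assume "even a \<and> even b \<and> even c"
    then have "2 dvd a + b" "2 dvd b + c" by auto
    then have "2 dvd gcd (a+b) (b+c)" by simp
    then show False using assms(5) by simp
  qed
  have ac: "a \<noteq> c"
  proof
    assume "a = c"
    then have "gcd (a+b) (b+c) = a + b" by (simp add: add.commute)
    then show False using assms(5) pos by simp
  qed
  have two: "card {i. i+1 < n \<and> (i+1 = p \<or> i+1 = q)} = 2"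
    if "1 \<le> p" "1 \<le> q" "p < n" "q < n" "p \<noteq> q" for p q
  proof -
    have "{i. i+1 < n \<and> (i+1 = p \<or> i+1 = q)} = {p - 1, q - 1}" using that by auto
    moreover have "p - 1 \<noteq> q - 1" using that by simp
    ultimately show ?thesis by simp
  qed
  have nD: "dead_ends (meander_adj [a, b, c] [n]) P = dead_ends E P" unfolding E_def ..
  have "card (dead_ends E P) = 2"
  proof (cases "even a")
    case ea: True
    then obtain a' where a': "a = 2*a'" by (auto elim: evenE)
    show ?thesis
    proof (cases "even b")
      case eb: True
      then obtain b' where b': "b = 2*b'" by (auto elim: evenE)
      have oc: "odd c" using noteven ea eb by blast
      have on: "odd n" unfolding pos(4)[symmetric] using oc a' b' by simp
      have "dead_ends E P = {i. i+1 < n \<and> (i+1 = a' \<or> i+1 = a + b')}"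
        unfolding D2 using ea eb oc on pos a' b' by auto
      then show ?thesis using two[of a' "a+b'"] a' b' pos by simp
    next
      case ob: False
      show ?thesis
      proof (cases "even c")
        case ec: True
        then obtain c' where c': "c = 2*c'" by (auto elim: evenE)
        have on: "odd n" unfolding pos(4)[symmetric] using ob a' c' by simp
        have "dead_ends E P = {i. i+1 < n \<and> (i+1 = a' \<or> i+1 = a + b + c')}"
          unfolding D2 using ea ob ec on pos a' c' by auto
        then show ?thesis using two[of a' "a+b+c'"] a' c' pos by simp
      next
        case oc: False
        have en: "even n" unfolding pos(4)[symmetric] using ob oc ea by simp
        then obtain n' where n': "n = 2*n'" by (auto elim: evenE)
        have "dead_ends E P = {i. i+1 < n \<and> (i+1 = a' \<or> i+1 = n')}"
          unfolding D2 using ea ob oc en pos a' n' by auto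
        then show ?thesis using two[of a' n'] a' n' pos ob by simp
      qed
    qed
  next
    case oa: False
    show ?thesis
    proof (cases "even b")
      case eb: True
      then obtain b' where b': "b = 2*b'" by (auto elim: evenE)
      show ?thesis
      proof (cases "even c")
        case ec: True
        then obtain c' where c': "c = 2*c'" by (auto elim: evenE)
        have on: "odd n" unfolding pos(4)[symmetric] using oa b' c' by simp
        have "dead_ends E P = {i. i+1 < n \<and> (i+1 = a + b' \<or> i+1 = a + b + c')}"
          unfolding D2 using oa eb ec on pos b' c' by auto
        then show ?thesis using two[of "a+b'" "a+b+c'"] b' c' pos by simp
      next
        case oc: False
        have en: "even n" unfolding pos(4)[symmetric] using oa oc eb by simp
        then obtain n' where n': "n = 2*n'" by (auto elim: evenE)
        have "dead_ends E P = {i. i+1 < n \<and> (i+1 = a + b' \<or> i+1 = n')}"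
          unfolding D2 using oa eb oc en pos b' n' by auto
        moreover have "a + b' \<noteq> n'" using ac b' n' pos by linarith
        ultimately show ?thesis using two[of "a+b'" n'] b' n' pos by simp
      qed
    next
      case ob: False
      then have ec: "even c" using notodd oa by blast
      then obtain c' where c': "c = 2*c'" by (auto elim: evenE)
      have en: "even n" unfolding pos(4)[symmetric] using oa ob ec by simp
      then obtain n' where n': "n = 2*n'" by (auto elim: evenE)
      have "dead_ends E P = {i. i+1 < n \<and> (i+1 = a + b + c' \<or> i+1 = n')}"
        unfolding D2 using oa ob ec en pos c' n' by auto
      then show ?thesis using two[of "a+b+c'" n'] c' n' pos by simp
    qed
  qed
  then show ?thesis unfolding nD .
qed

end
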